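(* Let $E: y^2=x^3+Ax+B$ be an elliptic curve over $\mathbb{Q}(2^\infty)$ with $j(E)\in\mathbb{Q}\setminus\{0,1728\}$, and let $E'$ be as in the context. If $E(\mathbb{Q}(2^\infty))[2]\neq\{\mathcal{O}\}$, then $E(\mathbb{Q}(2^\infty))[2]=E[2]$ and $E'(\mathbb{Q})[2]\neq\{\mathcal{O}\}$.
   Context: $\mathbb{Q}(2^\infty)=\mathbb{Q}(\{\sqrt{m}: m\in\mathbb{Z}\})$ is the compositum of all quadratic extensions of $\mathbb{Q}$ in $\mathbb{C}$. With $j=j(E)$, $E'$ is the elliptic curve over $\mathbb{Q}$ given by $y^2=x^3-\frac{27j}{j-1728}x+\frac{54j}{j-1728}$ (a quadratic twist of $E$ with the same $j$-invariant). *)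

theory Defs
  imports Complex_Main
begin

text \<open>Q(2^infinity): the subfield of the complex numbers generated by the square roots
  of all integers, i.e. the compositum of all quadratic extensions of Q in C.\<close>
inductive_set Q2inf :: "complex set" where
  rat: "q \<in> \<rat> \<Longrightarrow> q \<in> Q2inf"
| sqrt: "csqrt (of_int m) \<in> Q2inf"
| add: "a \<in> Q2inf \<Longrightarrow> b \<in> Q2inf \<Longrightarrow> a + b \<in> Q2inf"
| uminus: "a \<in> Q2inf \<Longrightarrow> - a \<in> Q2inf"
| mult: "a \<in> Q2inf \<Longrightarrow> b \<in> Q2inf \<Longrightarrow> a * b \<in> Q2inf"
| inverse: "a \<in> Q2inf \<Longrightarrow> inverse a \<in> Q2inf"

text \<open>Points of y^2 = x^3 + A x + B over C in projective form: None is the point at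
  infinity O, Some (x,y) an affine point.\<close>
type_synonym cpoint = "(complex \<times> complex) option"

definition on_curve :: "complex \<Rightarrow> complex \<Rightarrow> cpoint \<Rightarrow> bool" where
  "on_curve A B P = (case P of None \<Rightarrow> True | Some (x, y) \<Rightarrow> y^2 = x^3 + A * x + B)"

definition ell_add :: "complex \<Rightarrow> cpoint \<Rightarrow> cpoint \<Rightarrow> cpoint" where
  "ell_add A P Q = (case P of None \<Rightarrow> Q | Some (x1, y1) \<Rightarrow>
     (case Q of None \<Rightarrow> P | Some (x2, y2) \<Rightarrow>
       (if x1 = x2 \<and> y1 = - y2 then None
        else let l = (if x1 = x2 then (3 * x1^2 + A) / (2 * y1) else (y2 - y1) / (x2 - x1));
                 x3 = l^2 - x1 - x2
             in Some (x3, l * (x1 - x3) - y1))))"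

definition ell_points :: "complex set \<Rightarrow> complex \<Rightarrow> complex \<Rightarrow> cpoint set" where
  "ell_points K A B = {P. on_curve A B P \<and>
      (case P of None \<Rightarrow> True | Some (x, y) \<Rightarrow> x \<in> K \<and> y \<in> K)}"

text \<open>E(K)[2]; E[2] is E(C)[2], i.e. K = UNIV.\<close>
definition two_torsion :: "complex set \<Rightarrow> complex \<Rightarrow> complex \<Rightarrow> cpoint set" where
  "two_torsion K A B = {P \<in> ell_points K A B. ell_add A P P = None}"

definition j_inv :: "complex \<Rightarrow> complex \<Rightarrow> complex" where
  "j_inv A B = 1728 * (4 * A^3) / (4 * A^3 + 27 * B^2)"

end

theory Submission
  imports Defs
begin

inductive_set gen :: "int list \<Rightarrow> complex set" for ms :: "int list" where
  rat: "q \<in> \<rat> \<Longrightarrow> q \<in> gen ms"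
| sqrt: "m \<in> set ms \<Longrightarrow> csqrt (of_int m) \<in> gen ms"
| add: "a \<in> gen ms \<Longrightarrow> b \<in> gen ms \<Longrightarrow> a + b \<in> gen ms"
| uminus: "a \<in> gen ms \<Longrightarrow> - a \<in> gen ms"
| mult: "a \<in> gen ms \<Longrightarrow> b \<in> gen ms \<Longrightarrow> a * b \<in> gen ms"
| inverse: "a \<in> gen ms \<Longrightarrow> inverse a \<in> gen ms"

lemma gen_diff: "a \<in> gen ms \<Longrightarrow> b \<in> gen ms \<Longrightarrow> a - b \<in> gen ms"
  using gen.add[OF _ gen.uminus] by (metis diff_conv_add_uminus)

lemma gen_div: "a \<in> gen ms \<Longrightarrow> b \<in> gen ms \<Longrightarrow> a / b \<in> gen ms"
  using gen.mult[OF _ gen.inverse] by (metis divide_inverse)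

lemma gen_mono: "x \<in> gen ms \<Longrightarrow> set ms \<subseteq> set ms' \<Longrightarrow> x \<in> gen ms'"
  by (induction rule: gen.induct) (auto intro: gen.intros)

lemma Q2inf_gen: "x \<in> Q2inf \<Longrightarrow> \<exists>ms. x \<in> gen ms"
proof (induction rule: Q2inf.induct)
  case (rat q) then show ?case by (auto intro: gen.rat)
next
  case (sqrt m) then show ?case by (metis gen.sqrt list.set_intros(1))
next
  case (add a b)
  then obtain m1 m2 where "a \<in> gen m1" "b \<in> gen m2" by blast
  then have "a \<in> gen (m1 @ m2)" "b \<in> gen (m1 @ m2)" by (auto elim: gen_mono)
  then show ?case by (blast intro: gen.add)
next
  case (uminus a) then show ?case by (blast intro: gen.uminus)
next
  case (mult a b)
  then obtain m1 m2 where "a \<in> gen m1" "b \<in> gen m2" by blast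
  then have "a \<in> gen (m1 @ m2)" "b \<in> gen (m1 @ m2)" by (auto elim: gen_mono)
  then show ?case by (blast intro: gen.mult)
next
  case (inverse a) then show ?case by (blast intro: gen.inverse)
qed

lemma gen_Nil: "x \<in> gen [] \<Longrightarrow> x \<in> \<rat>"
  by (induction rule: gen.induct) auto

lemma gen_decomp:
  assumes "x \<in> gen (m # ms)"
  shows "\<exists>p q. p \<in> gen ms \<and> q \<in> gen ms \<and> x = p + q * csqrt (of_int m)"
  using assms
proof (induction rule: gen.induct)
  case (rat q) then show ?case by (metis add_0_right gen.rat mult_zero_left Rats_0)
next
  case (sqrt m')
  show ?case
  proof (cases "m' = m")
    case True then show ?thesis
      by (rule_tac x=0 in exI, rule_tac x=1 in exI) (auto intro: gen.rat)
  next
    case False then have "m' \<in> set ms" using sqrt by auto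
    then show ?thesis
      by (rule_tac x="csqrt (of_int m')" in exI, rule_tac x=0 in exI) (auto intro: gen.intros)
  qed
next
  case (add a b)
  then obtain p q p' q' where "p \<in> gen ms" "q \<in> gen ms" "p' \<in> gen ms" "q' \<in> gen ms"
    "a = p + q * csqrt (of_int m)" "b = p' + q' * csqrt (of_int m)" by blast
  then show ?case
    by (rule_tac x="p+p'" in exI, rule_tac x="q+q'" in exI) (auto intro: gen.intros simp: algebra_simps)
next
  case (uminus a)
  then obtain p q where "p \<in> gen ms" "q \<in> gen ms" "a = p + q * csqrt (of_int m)" by blast
  then show ?case
    by (rule_tac x="-p" in exI, rule_tac x="-q" in exI) (auto intro: gen.intros simp: algebra_simps)
next
  case (mult a b)
  then obtain p q p' q' where h: "p \<in> gen ms" "q \<in> gen ms" "p' \<in> gen ms" "q' \<in> gen ms"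
    "a = p + q * csqrt (of_int m)" "b = p' + q' * csqrt (of_int m)" by blast
  have mm: "(of_int m :: complex) \<in> gen ms" by (auto intro: gen.rat)
  have r2: "csqrt (of_int m) * csqrt (of_int m) = of_int m"
    by (metis power2_csqrt power2_eq_square)
  have "a * b = (p*p' + q*q'*of_int m) + (p*q' + q*p') * csqrt (of_int m)"
  proof -
    have "\<And>r::complex. (p + q*r)*(p'+q'*r) = p*p' + q*q'*(r*r) + (p*q'+q*p')*r"
      by (simp add: algebra_simps)
    from this[of "csqrt (of_int m)"] show ?thesis unfolding h(5,6) r2 .
  qed
  moreover have "p*p' + q*q'*of_int m \<in> gen ms" "p*q' + q*p' \<in> gen ms"
    using h mm by (blast intro: gen.add gen.mult)+
  ultimately show ?case by blast
next
  case (inverse a)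
  then obtain p q where h: "p \<in> gen ms" "q \<in> gen ms" "a = p + q * csqrt (of_int m)" by blast
  let ?r = "csqrt (of_int m)"
  have mm: "(of_int m :: complex) \<in> gen ms" by (auto intro: gen.rat)
  have r2: "?r * ?r = of_int m"
    by (metis power2_csqrt power2_eq_square)
  show ?case
  proof (cases "p*p - q*q*of_int m = 0")
    case True
    show ?thesis
    proof (cases "q = 0")
      case True
      then show ?thesis using h
        by (rule_tac x="inverse p" in exI, rule_tac x=0 in exI) (auto intro: gen.intros)
    next
      case False
      have "(p/q) * (p/q) = ?r * ?r" using True False r2 by (simp add: field_simps)
      then have "?r = p/q \<or> ?r = -(p/q)"
        by (metis minus_mult_minus square_eq_iff)
      moreover have "p/q \<in> gen ms" using h by (blast intro: gen_div)
      ultimately have "?r \<in> gen ms" by (metis gen.uminus)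
      then have "inverse a \<in> gen ms" using h by (blast intro: gen.add gen.mult gen.inverse)
      moreover have "(0::complex) \<in> gen ms" by (simp add: gen.rat)
      ultimately show ?thesis by force
    qed
  next
    case False
    let ?N = "p*p - q*q*of_int m"
    have "inverse a = p / ?N + (- q / ?N) * ?r"
    proof -
      have "\<And>r::complex. (p + q*r)*(p-q*r) = p*p - q*q*(r*r)"
        by (simp add: algebra_simps)
      from this[of ?r] have "a * (p - q * ?r) = ?N" unfolding h(3) r2 .
      moreover have "a \<noteq> 0" using calculation False by auto
      ultimately have "inverse a = (p - q * ?r) / ?N" using False
        by (metis divide_inverse mult.commute nonzero_mult_div_cancel_left)
      also have "\<dots> = p / ?N + (- q / ?N) * ?r"
        by (simp add: divide_inverse algebra_simps)
      finally show ?thesis .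
    qed
    moreover have "p / ?N \<in> gen ms" "- q / ?N \<in> gen ms"
      using h mm by (blast intro: gen.uminus gen.mult gen_div gen_diff)+
    ultimately show ?thesis by blast
  qed
qed

lemma vieta3:
  fixes a b c x1 x2 :: complex
  assumes "x1^3 + a*x1^2 + b*x1 + c = 0" "x2^3 + a*x2^2 + b*x2 + c = 0" "x1 \<noteq> x2"
  shows "(-a-x1-x2)^3 + a*(-a-x1-x2)^2 + b*(-a-x1-x2) + c = 0"
proof -
  let ?h = "x1^2 + x1*x2 + x2^2 + a*(x1+x2) + b"
  have "(x1 - x2) * ?h = (x1^3 + a*x1^2 + b*x1 + c) - (x2^3 + a*x2^2 + b*x2 + c)"
    by algebra
  then have h0: "?h = 0" using assms by simp
  have "(-a-x1-x2)^3 + a*(-a-x1-x2)^2 + b*(-a-x1-x2) + c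
      = ((-a-x1-x2) - x1) * ?h + (x1^3 + a*x1^2 + b*x1 + c)"
    by algebra
  then show ?thesis using h0 assms(1) by simp
qed

lemma expand3:
  fixes p q s M a b c :: complex
  assumes "s * s = M"
  shows "(p+q*s)^3 + a*(p+q*s)^2 + b*(p+q*s) + c
    = (p^3 + 3*p*q^2*M + a*(p^2+q^2*M) + b*p + c) + (3*p^2*q + q^3*M + 2*a*p*q + b*q)*s"
  unfolding assms[symmetric] by algebra

lemma gen_power: "x \<in> gen ms \<Longrightarrow> x ^ n \<in> gen ms"
  by (induction n) (auto intro: gen.rat gen.mult)

lemma cubic_gen:
  fixes a b c x :: complex
  assumes "x \<in> gen ms" "a \<in> \<rat>" "b \<in> \<rat>" "c \<in> \<rat>" "x^3 + a*x^2 + b*x + c = 0"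
  shows "\<exists>r\<in>\<rat>. r^3 + a*r^2 + b*r + c = 0"
  using assms
proof (induction ms arbitrary: x)
  case Nil
  then show ?case using gen_Nil by blast
next
  case (Cons m ms)
  let ?r = "csqrt (of_int m)"
  obtain p q where h: "p \<in> gen ms" "q \<in> gen ms" "x = p + q * ?r"
    using gen_decomp[OF Cons.prems(1)] by blast
  have r2: "?r * ?r = of_int m"
    by (metis power2_csqrt power2_eq_square)
  have G: "a \<in> gen ms" "b \<in> gen ms" "c \<in> gen ms" "of_int m \<in> gen ms"
    "(2::complex) \<in> gen ms" "(3::complex) \<in> gen ms"
    using Cons.prems by (auto intro: gen.rat)
  show ?case
  proof (cases "?r \<in> gen ms \<or> q = 0")
    case True
    then have "x \<in> gen ms" using h by (auto intro: gen.add gen.mult)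
    then show ?thesis using Cons by blast
  next
    case False
    define U where "U = p^3 + 3*p*q^2*of_int m + a*(p^2+q^2*of_int m) + b*p + c"
    define V where "V = 3*p^2*q + q^3*of_int m + 2*a*p*q + b*q"
    have UV: "U \<in> gen ms" "V \<in> gen ms" unfolding U_def V_def
      using G h by (blast intro: gen.add gen.mult gen_power)+
    have e1: "x^3 + a*x^2 + b*x + c = U + V * ?r"
      unfolding h(3) U_def V_def by (rule expand3[OF r2])
    have e2: "(p + (-q)*?r)^3 + a*(p + (-q)*?r)^2 + b*(p + (-q)*?r) + c = U - V * ?r"
      unfolding U_def V_def expand3[OF r2] by (simp add: algebra_simps)
    have V0: "V = 0"
    proof (rule ccontr)
      assume "V \<noteq> 0"
      then have "?r = - U / V" using e1 Cons.prems(5) by (simp add: field_simps add_eq_0_iff)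
      then have "?r \<in> gen ms" using UV by (metis gen.uminus gen_div)
      then show False using False by blast
    qed
    then have U0: "U = 0" using e1 Cons.prems(5) by simp
    have f2: "(p + (-q)*?r)^3 + a*(p + (-q)*?r)^2 + b*(p + (-q)*?r) + c = 0"
      using e2 U0 V0 by simp
    have "?r \<noteq> 0" using False gen.rat[of 0] by auto
    then have ne: "x \<noteq> p + (-q)*?r" using False h(3) by auto
    have f3: "(-a-x-(p + (-q)*?r))^3 + a*(-a-x-(p + (-q)*?r))^2 + b*(-a-x-(p + (-q)*?r)) + c = 0"
      by (rule vieta3[OF Cons.prems(5) f2 ne])
    have "-a-x-(p + (-q)*?r) = -a - 2*p" using h(3) by simp
    moreover have "-a - 2*p \<in> gen ms" using G h by (blast intro: gen_diff gen.mult gen.uminus)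
    ultimately show ?thesis using f3 Cons.IH Cons.prems by metis
  qed
qed

lemma Q2inf_diff: "a \<in> Q2inf \<Longrightarrow> b \<in> Q2inf \<Longrightarrow> a - b \<in> Q2inf"
  using Q2inf.add[OF _ Q2inf.uminus] by (metis diff_conv_add_uminus)

lemma Q2inf_div: "a \<in> Q2inf \<Longrightarrow> b \<in> Q2inf \<Longrightarrow> a / b \<in> Q2inf"
  using Q2inf.mult[OF _ Q2inf.inverse] by (metis divide_inverse)

lemma Q2inf_sqrt_rat:
  assumes "q \<in> \<rat>"
  shows "\<exists>s\<in>Q2inf. s * s = q"
proof -
  obtain r where r: "q = of_rat r" using assms Rats_cases by blast
  obtain a b where ab: "quotient_of r = (a, b)" by (cases "quotient_of r")
  have bpos: "b > 0" using quotient_of_denom_pos[OF ab] .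
  have "r = of_int a / of_int b" using quotient_of_div[OF ab] .
  then have q: "q = of_int a / of_int b" using r by (simp add: of_rat_divide)
  let ?s = "csqrt (of_int (a*b)) / of_int b"
  have "?s \<in> Q2inf" by (intro Q2inf_div Q2inf.sqrt Q2inf.rat) simp
  moreover have "?s * ?s = q"
  proof -
    have "csqrt (of_int (a*b)) * csqrt (of_int (a*b)) = (of_int (a*b) :: complex)"
      by (metis power2_csqrt power2_eq_square)
    then show ?thesis using bpos unfolding q by (simp add: field_simps)
  qed
  ultimately show ?thesis by blast
qed

lemma ell_add_self_None: "ell_add A (Some (x, y)) (Some (x, y)) = None \<longleftrightarrow> y = 0"
  by (simp add: ell_add_def Let_def)

lemma two_torsion_Some:
  "Some (x, y) \<in> two_torsion K A B \<longleftrightarrow> y = 0 \<and> y^2 = x^3 + A*x + B \<and> x \<in> K \<and> y \<in> K"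
  unfolding two_torsion_def ell_points_def on_curve_def using ell_add_self_None by auto

lemma None_two_torsion: "None \<in> two_torsion K A B"
  unfolding two_torsion_def ell_points_def on_curve_def by (simp add: ell_add_def)

theorem lemma5p6:
  fixes A B :: complex
  assumes "A \<in> Q2inf" and "B \<in> Q2inf"
    and "4 * A^3 + 27 * B^2 \<noteq> 0"
    and "j_inv A B \<in> \<rat>" and "j_inv A B \<noteq> 0" and "j_inv A B \<noteq> 1728"
    and "two_torsion Q2inf A B \<noteq> {None}"
  shows "two_torsion Q2inf A B = two_torsion UNIV A B
    \<and> two_torsion \<rat> (- 27 * j_inv A B / (j_inv A B - 1728))
                      (54 * j_inv A B / (j_inv A B - 1728)) \<noteq> {None}"
proof -
  define j where "j = j_inv A B"
  define A' where "A' = - 27 * j / (j - 1728)"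
  define B' where "B' = 54 * j / (j - 1728)"
  define d where "d = - B / (2 * A)"
  have D: "4 * A^3 + 27 * B^2 \<noteq> 0" by fact
  have A0: "A \<noteq> 0" using assms(5) unfolding j_inv_def by auto
  have B0: "B \<noteq> 0"
  proof
    assume "B = 0"
    then have "j_inv A B = 1728" using A0 unfolding j_inv_def by simp
    then show False using assms(6) by simp
  qed
  have d0: "d \<noteq> 0" unfolding d_def using A0 B0 by simp
  have jm: "j - 1728 = - 1728 * 27 * B^2 / (4 * A^3 + 27 * B^2)"
    unfolding j_def j_inv_def using D by (simp add: field_simps)
  have jm0: "j - 1728 \<noteq> 0" using assms(6) j_def by simp
  have jj: "j = 1728 * (4 * A^3) / (4 * A^3 + 27 * B^2)" unfolding j_def j_inv_def ..
  have "- 27 * j = (4 * A^3 / B^2) * (j - 1728)"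
    unfolding jm jj using D B0 by (simp add: field_simps)
  then have A'e: "A' = 4 * A^3 / B^2"
    unfolding A'_def using jm0 by simp
  have "54 * j = (- 8 * A^3 / B^2) * (j - 1728)"
    unfolding jm jj using D B0 by (simp add: field_simps)
  then have B'e: "B' = - 8 * A^3 / B^2"
    unfolding B'_def using jm0 by simp
  have AA: "A = A' * d^2" unfolding A'e d_def using A0 B0 by (simp add: field_simps power2_eq_square power3_eq_cube)
  have BB: "B = B' * d^3" unfolding B'e d_def using A0 B0 by (simp add: field_simps power2_eq_square power3_eq_cube)
  have A'Q: "A' \<in> \<rat>" "B' \<in> \<rat>" unfolding A'_def B'_def using assms(4) j_def by auto
  have two: "(2::complex) \<in> Q2inf" by (rule Q2inf.rat) simp
  have dQ: "d \<in> Q2inf" unfolding d_def using assms(1,2) two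
    by (blast intro: Q2inf_div Q2inf.mult Q2inf.uminus)
  have scale: "x^3 + A*x + B = d^3 * ((x/d)^3 + A' * (x/d) + B')" for x
    unfolding AA BB using d0 by (simp add: field_simps power2_eq_square power3_eq_cube)
  obtain P where P: "P \<in> two_torsion Q2inf A B" "P \<noteq> None"
    using assms(7) None_two_torsion by blast
  then obtain x0 y0 where "P = Some (x0, y0)" by (cases P) auto
  then have x0: "x0 \<in> Q2inf" "x0^3 + A*x0 + B = 0" using P two_torsion_Some by auto
  have "(x0/d)^3 + A' * (x0/d) + B' = 0" using x0(2) scale[of x0] d0 by simp
  moreover have "x0/d \<in> Q2inf" using x0(1) dQ by (rule Q2inf_div)
  ultimately obtain r where r: "r \<in> \<rat>" "r^3 + A' * r + B' = 0"
    using cubic_gen[of "x0/d" _ 0 A' B'] A'Q Q2inf_gen by fastforce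
  have part2: "two_torsion \<rat> A' B' \<noteq> {None}"
  proof -
    have "Some (r, 0) \<in> two_torsion \<rat> A' B'" using r two_torsion_Some by auto
    then show ?thesis by auto
  qed
  have part1: "two_torsion UNIV A B \<subseteq> two_torsion Q2inf A B"
  proof
    fix Q assume Q: "Q \<in> two_torsion UNIV A B"
    show "Q \<in> two_torsion Q2inf A B"
    proof (cases Q)
      case None then show ?thesis using None_two_torsion by simp
    next
      case (Some xy)
      then obtain x y where xy: "Q = Some (x, y)" by (cases xy) auto
      then have y0: "y = 0" and fx: "x^3 + A*x + B = 0" using Q two_torsion_Some by auto
      define X where "X = x / d"
      have fX: "X^3 + A' * X + B' = 0" using fx scale[of x] d0 unfolding X_def by simp
      define c where "c = r^2 + A'"
      have "(X - r) * (X^2 + r*X + c) = (X^3 + A' * X + B') - (r^3 + A' * r + B')"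
        unfolding c_def by algebra
      then have "X = r \<or> X^2 + r*X + c = 0" using fX r(2) by simp
      moreover
      obtain s where s: "s \<in> Q2inf" "s * s = -3 * r^2 - 4 * A'"
        using Q2inf_sqrt_rat[of "-3 * r^2 - 4 * A'"] r(1) A'Q by auto
      have "X^2 + r*X + c = (X - (-r + s)/2) * (X - (-r - s)/2)"
        unfolding c_def using s(2) by (simp add: field_simps power2_eq_square) algebra?
      ultimately have "X = r \<or> X = (-r + s)/2 \<or> X = (-r - s)/2" by auto
      moreover have "r \<in> Q2inf" using r(1) by (rule Q2inf.rat)
      moreover have "(-r + s)/2 \<in> Q2inf" "(-r - s)/2 \<in> Q2inf"
        using s(1) two \<open>r \<in> Q2inf\<close> by (blast intro: Q2inf_div Q2inf_diff Q2inf.add Q2inf.uminus)+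
      ultimately have "X \<in> Q2inf" by metis
      then have "x \<in> Q2inf" using dQ d0 unfolding X_def
        by (metis Q2inf.mult nonzero_mult_div_cancel_left times_divide_eq_right)
      then show ?thesis using xy y0 fx two_torsion_Some[of x y Q2inf A B] by (auto intro: Q2inf.rat)
    qed
  qed
  have part0: "two_torsion Q2inf A B \<subseteq> two_torsion UNIV A B"
    unfolding two_torsion_def ell_points_def by (auto split: option.splits)
  show ?thesis using part0 part1 part2 unfolding A'_def B'_def j_def by blast
qed

end
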